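(* Consider the planar system $$\frac{dN}{dt}=rN\left(1-\frac{N}{K}-\frac{h}{w+N}\right)-\frac{aNP}{b+N^2},\qquad \frac{dP}{dt}=\frac{cNP}{b+N^2}-\delta P,$$ where $r,K,h,w,a,b,c,\delta$ are positive constants with $w<K$. Let $D_2=c^2-4b\delta^2$, $N_4=\frac{c+\sqrt{D_2}}{2\delta}$, $N_5=\frac{c-\sqrt{D_2}}{2\delta}$, $N_6=\frac{c}{2\delta}$, and for $N>0$ let $$P(N)=\frac{r(b+N^2)\left[(K-w)N-K(h-w)-N^2\right]}{Ka(w+N)}.$$ (i) If $b>\left(\frac{c}{2\delta}\right)^2$, then there are no coexistence equilibrium points. (ii) If $b=\left(\frac{c}{2\delta}\right)^2$ and $P(N_6)>0$, then there is exactly one coexistence equilibrium point, namely $E_6=(N_6,P(N_6))$. (iii) If $b<\left(\frac{c}{2\delta}\right)^2$, $P(N_4)>0$ and $P(N_5)>0$, then there are two coexistence equilibrium points, namely $E_4=(N_4,P(N_4))$ and $E_5=(N_5,P(N_5))$.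
   Context: $N(t)$ is the prey density and $P(t)$ the predator density. A coexistence equilibrium point is an equilibrium $(N,P)$ of the system with $N>0$ and $P>0$. *)

theory Defs
  imports Complex_Main
begin

definition prey_rhs :: "real \<Rightarrow> real \<Rightarrow> real \<Rightarrow> real \<Rightarrow> real \<Rightarrow> real \<Rightarrow> real \<Rightarrow> real \<Rightarrow> real" where
  "prey_rhs r K h w a b N P = r * N * (1 - N / K - h / (w + N)) - a * N * P / (b + N^2)"

definition pred_rhs :: "real \<Rightarrow> real \<Rightarrow> real \<Rightarrow> real \<Rightarrow> real \<Rightarrow> real" where
  "pred_rhs b c \<delta> N P = c * N * P / (b + N^2) - \<delta> * P"

definition coexist_eq :: "real \<Rightarrow> real \<Rightarrow> real \<Rightarrow> real \<Rightarrow> real \<Rightarrow> real \<Rightarrow> real \<Rightarrow> real \<Rightarrow> real \<Rightarrow> real \<Rightarrow> bool" where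
  "coexist_eq r K h w a b c \<delta> N P \<longleftrightarrow>
     N > 0 \<and> P > 0 \<and> prey_rhs r K h w a b N P = 0 \<and> pred_rhs b c \<delta> N P = 0"

definition Pn :: "real \<Rightarrow> real \<Rightarrow> real \<Rightarrow> real \<Rightarrow> real \<Rightarrow> real \<Rightarrow> real \<Rightarrow> real" where
  "Pn r K h w a b N = r * (b + N^2) * ((K - w) * N - K * (h - w) - N^2) / (K * a * (w + N))"

end

theory Submission
  imports Defs
begin

lemma prey_iff:
  fixes r K h w a b N P :: real
  assumes "N > 0" "w > 0" "K > 0" "a > 0" "b > 0"
  shows "prey_rhs r K h w a b N P = 0 \<longleftrightarrow> P = Pn r K h w a b N"
proof -
  have bn: "b + N^2 > 0" using assms by (simp add: add_pos_nonneg)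
  have wn: "w + N > 0" using assms by simp
  have "prey_rhs r K h w a b N P = N * (r * ((K - w) * N - K * (h - w) - N^2) / (K * (w + N)) - a * P / (b + N^2))"
    unfolding prey_rhs_def using assms bn wn by (simp add: field_simps power2_eq_square)
  also have "\<dots> = 0 \<longleftrightarrow> r * ((K - w) * N - K * (h - w) - N^2) / (K * (w + N)) = a * P / (b + N^2)"
    using assms by simp
  also have "\<dots> \<longleftrightarrow> P = Pn r K h w a b N"
  proof -
    define X where "X = r * ((K - w) * N - K * (h - w) - N^2)"
    have e: "Pn r K h w a b N = (b + N^2) * (X / (K * (w + N))) / a"
      unfolding Pn_def X_def by (simp add: field_simps)
    have "Y = a * P / (b + N^2) \<longleftrightarrow> (b + N^2) * Y / a = P" for Y
      using assms bn by (auto simp: field_simps)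
    then have "X / (K * (w + N)) = a * P / (b + N^2) \<longleftrightarrow> (b + N^2) * (X / (K * (w + N))) / a = P" .
    then show ?thesis unfolding e X_def by auto
  qed
  finally show ?thesis .
qed

lemma pred_iff:
  fixes b c \<delta> N P :: real
  assumes "P > 0" "b > 0"
  shows "pred_rhs b c \<delta> N P = 0 \<longleftrightarrow> \<delta> * N^2 - c * N + \<delta> * b = 0"
proof -
  have bn: "b + N^2 > 0" using assms by (simp add: add_pos_nonneg)
  have "pred_rhs b c \<delta> N P = P * (c * N - \<delta> * (b + N^2)) / (b + N^2)"
    unfolding pred_rhs_def using bn by (simp add: field_simps)
  then have "pred_rhs b c \<delta> N P = 0 \<longleftrightarrow> c * N - \<delta> * (b + N^2) = 0"
    using assms bn by simp
  then show ?thesis by (auto simp: algebra_simps)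
qed

lemma quad_roots:
  fixes b c \<delta> N :: real
  assumes "\<delta> > 0" "c^2 - 4 * b * \<delta>^2 \<ge> 0"
  shows "\<delta> * N^2 - c * N + \<delta> * b = 0 \<longleftrightarrow>
    N = (c + sqrt (c^2 - 4 * b * \<delta>^2)) / (2 * \<delta>) \<or> N = (c - sqrt (c^2 - 4 * b * \<delta>^2)) / (2 * \<delta>)"
proof -
  define s where "s = sqrt (c^2 - 4 * b * \<delta>^2)"
  have s2: "s^2 = c^2 - 4 * b * \<delta>^2" using assms s_def by simp
  have "4 * \<delta> * (\<delta> * N^2 - c * N + \<delta> * b) = (2*\<delta>*N - c - s) * (2*\<delta>*N - c + s)"
    using s2 by (simp add: algebra_simps power2_eq_square)
  then have "\<delta> * N^2 - c * N + \<delta> * b = 0 \<longleftrightarrow> (2*\<delta>*N - c - s) = 0 \<or> (2*\<delta>*N - c + s) = 0"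
    using assms by (metis mult_eq_0_iff zero_less_mult_iff zero_less_numeral less_irrefl)
  also have "\<dots> \<longleftrightarrow> N = (c + s) / (2 * \<delta>) \<or> N = (c - s) / (2 * \<delta>)"
    using assms by (auto simp: field_simps)
  finally show ?thesis unfolding s_def .
qed

lemma quad_none:
  fixes b c \<delta> N :: real
  assumes "\<delta> > 0" "c^2 - 4 * b * \<delta>^2 < 0"
  shows "\<delta> * N^2 - c * N + \<delta> * b \<noteq> 0"
proof
  assume h: "\<delta> * N^2 - c * N + \<delta> * b = 0"
  have "4 * \<delta> * (\<delta> * N^2 - c * N + \<delta> * b) = (2*\<delta>*N - c)^2 - (c^2 - 4 * b * \<delta>^2)"
    by (simp add: algebra_simps power2_eq_square)
  moreover have "(2*\<delta>*N - c)^2 - (c^2 - 4 * b * \<delta>^2) > 0" using assms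
    by (smt (verit) zero_le_power2)
  ultimately show False using h by simp
qed

theorem theorem3:
  fixes r K h w a b c \<delta> :: real
  assumes "r > 0" "K > 0" "h > 0" "w > 0" "a > 0" "b > 0" "c > 0" "\<delta> > 0" "w < K"
  defines "D2 \<equiv> c^2 - 4 * b * \<delta>^2"
  defines "N4 \<equiv> (c + sqrt D2) / (2 * \<delta>)"
  defines "N5 \<equiv> (c - sqrt D2) / (2 * \<delta>)"
  defines "N6 \<equiv> c / (2 * \<delta>)"
  shows "(b > (c / (2 * \<delta>))^2 \<longrightarrow>
            {(N, P). coexist_eq r K h w a b c \<delta> N P} = {})
       \<and> (b = (c / (2 * \<delta>))^2 \<and> Pn r K h w a b N6 > 0 \<longrightarrow>
            {(N, P). coexist_eq r K h w a b c \<delta> N P} = {(N6, Pn r K h w a b N6)})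
       \<and> (b < (c / (2 * \<delta>))^2 \<and> Pn r K h w a b N4 > 0 \<and> Pn r K h w a b N5 > 0 \<longrightarrow>
            {(N, P). coexist_eq r K h w a b c \<delta> N P} =
              {(N4, Pn r K h w a b N4), (N5, Pn r K h w a b N5)}
            \<and> card {(N, P). coexist_eq r K h w a b c \<delta> N P} = 2)"
proof -
  have key: "coexist_eq r K h w a b c \<delta> N P \<longleftrightarrow>
     N > 0 \<and> P > 0 \<and> P = Pn r K h w a b N \<and> \<delta> * N^2 - c * N + \<delta> * b = 0" for N P
    unfolding coexist_eq_def using prey_iff[of N w K a b r h P] pred_iff[of P b c \<delta> N] assms
    by blast
  have bD: "b > (c / (2 * \<delta>))^2 \<longleftrightarrow> D2 < 0" "b = (c / (2 * \<delta>))^2 \<longleftrightarrow> D2 = 0"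
       "b < (c / (2 * \<delta>))^2 \<longleftrightarrow> D2 > 0"
    unfolding D2_def using assms by (auto simp: field_simps power2_eq_square)
  have i: "b > (c / (2 * \<delta>))^2 \<longrightarrow> {(N, P). coexist_eq r K h w a b c \<delta> N P} = {}"
    using quad_none[of \<delta> c b] bD(1) assms unfolding key D2_def by auto
  have ii: "b = (c / (2 * \<delta>))^2 \<and> Pn r K h w a b N6 > 0 \<longrightarrow>
            {(N, P). coexist_eq r K h w a b c \<delta> N P} = {(N6, Pn r K h w a b N6)}"
  proof
    assume H: "b = (c / (2 * \<delta>))^2 \<and> Pn r K h w a b N6 > 0"
    then have D0: "D2 = 0" using bD by simp
    have roots: "\<delta> * N^2 - c * N + \<delta> * b = 0 \<longleftrightarrow> N = N6" for N
      using quad_roots[of \<delta> c b N] assms D0 unfolding D2_def N6_def by simp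
    have "N6 > 0" unfolding N6_def using assms by simp
    then show "{(N, P). coexist_eq r K h w a b c \<delta> N P} = {(N6, Pn r K h w a b N6)}"
      unfolding key using roots H by auto
  qed
  have iii: "b < (c / (2 * \<delta>))^2 \<and> Pn r K h w a b N4 > 0 \<and> Pn r K h w a b N5 > 0 \<longrightarrow>
            {(N, P). coexist_eq r K h w a b c \<delta> N P} =
              {(N4, Pn r K h w a b N4), (N5, Pn r K h w a b N5)}
            \<and> card {(N, P). coexist_eq r K h w a b c \<delta> N P} = 2"
  proof
    assume H: "b < (c / (2 * \<delta>))^2 \<and> Pn r K h w a b N4 > 0 \<and> Pn r K h w a b N5 > 0"
    then have Dp: "D2 > 0" using bD by simp
    have roots: "\<delta> * N^2 - c * N + \<delta> * b = 0 \<longleftrightarrow> N = N4 \<or> N = N5" for N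
      using quad_roots[of \<delta> c b N] assms Dp unfolding D2_def N4_def N5_def by simp
    have sD: "sqrt D2 > 0" "sqrt D2 < c"
      using Dp apply simp
      using Dp assms unfolding D2_def
      by (smt (verit) real_sqrt_less_iff real_sqrt_abs zero_less_mult_iff zero_less_power power2_eq_square)
    have sp: "sqrt D2 > 0" using Dp by simp
    have p4a: "N4 > 0" unfolding N4_def using sp \<open>\<delta> > 0\<close> \<open>c > 0\<close>
      by (intro divide_pos_pos) linarith+
    have p4b: "N5 > 0" unfolding N5_def using sD \<open>\<delta> > 0\<close>
      by (intro divide_pos_pos) linarith+
    have p4c: "N4 \<noteq> N5" unfolding N4_def N5_def using sp \<open>\<delta> > 0\<close>
      by (simp add: divide_cancel_right)
    note p4 = p4a p4b p4c
    have S: "{(N, P). coexist_eq r K h w a b c \<delta> N P} =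
              {(N4, Pn r K h w a b N4), (N5, Pn r K h w a b N5)}"
      unfolding key using roots H p4 by auto
    show "{(N, P). coexist_eq r K h w a b c \<delta> N P} =
              {(N4, Pn r K h w a b N4), (N5, Pn r K h w a b N5)}
            \<and> card {(N, P). coexist_eq r K h w a b c \<delta> N P} = 2"
      using S p4 by simp
  qed
  show ?thesis using i ii iii by blast
qed

end
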